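(* Let $\boldsymbol\Sigma$ be a positive definite $n\times n$ covariance matrix associated with locations $s_1,\dots,s_n$ (in a fixed order). For $m\ge0$, let $\mathbf Q(m)=(\mathbf I-\mathbf B(m))^\top\mathbf F(m)^{-1}(\mathbf I-\mathbf B(m))$ be the NNGP precision matrix derived from $\boldsymbol\Sigma$ with neighbor sets $N_m(i)$ of size $\min(m,i-1)$ consisting of nearest previous locations, nested in $m$ (i.e. $N_m(i)\subseteq N_{m+1}(i)$). Let $\mathbf E(m)=(\boldsymbol\Sigma^{1/2})^\top\mathbf Q(m)\boldsymbol\Sigma^{1/2}$ and $\mathrm{KLD}(\mathbf I,\mathbf E(m))=\operatorname{tr}(\mathbf E(m))-\log|\mathbf E(m)|$. Then $\mathrm{KLD}(\mathbf I,\mathbf E(m))$ decreases monotonically with $m$.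
   Context: $\boldsymbol\Sigma^{1/2}(\boldsymbol\Sigma^{1/2})^\top=\boldsymbol\Sigma$. NNGP construction with neighbor sets $N(i)\subseteq\{1,\dots,i-1\}$: $\mathbf B$ strictly lower triangular with $\mathbf B_{i,N(i)}=\boldsymbol\Sigma(i,N(i))\boldsymbol\Sigma(N(i),N(i))^{-1}$, zero elsewhere; $\mathbf F$ diagonal with $\mathbf F_{ii}=\boldsymbol\Sigma_{ii}-\boldsymbol\Sigma(i,N(i))\boldsymbol\Sigma(N(i),N(i))^{-1}\boldsymbol\Sigma(N(i),i)$ (with $\mathbf F_{ii}=\boldsymbol\Sigma_{ii}$ if $N(i)=\emptyset$). $m=0$ gives $\mathbf Q(0)$ diagonal. *)

theory Defs
  imports Complex_Main
    "Jordan_Normal_Form.Gauss_Jordan_Elimination"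
    "Jordan_Normal_Form.DL_Submatrix"
    "Jordan_Normal_Form.Determinant"
begin

text \<open>Matrices are Jordan_Normal_Form matrices over the reals; indices are 0-based,
  so location s_i of the paper is s (i-1) here and N(i) is a subset of {0..<i}.\<close>

definition mat_trace :: "real mat \<Rightarrow> real" where
  "mat_trace A = (\<Sum>i<dim_row A. A $$ (i, i))"

definition pos_def_mat :: "nat \<Rightarrow> real mat \<Rightarrow> bool" where
  "pos_def_mat n S \<longleftrightarrow> S \<in> carrier_mat n n \<and> transpose_mat S = S \<and>
     (\<forall>v \<in> carrier_vec n. v \<noteq> 0\<^sub>v n \<longrightarrow> v \<bullet> (S *\<^sub>v v) > 0)"

definition minv :: "real mat \<Rightarrow> real mat" where
  "minv A = the (mat_inverse A)"

text \<open>Kriging weights Sigma(i,N(i)) Sigma(N(i),N(i))^{-1}, a 1 x |N(i)| matrix whose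
  columns follow the increasing order of N(i).\<close>
definition nngp_w :: "real mat \<Rightarrow> nat set \<Rightarrow> nat \<Rightarrow> real mat" where
  "nngp_w S Ni i = submatrix S {i} Ni * minv (submatrix S Ni Ni)"

definition nngp_B :: "nat \<Rightarrow> real mat \<Rightarrow> (nat \<Rightarrow> nat set) \<Rightarrow> real mat" where
  "nngp_B n S N = mat n n (\<lambda>(i, j).
     if j \<in> N i then nngp_w S (N i) i $$ (0, card {a \<in> N i. a < j}) else 0)"

definition nngp_F :: "nat \<Rightarrow> real mat \<Rightarrow> (nat \<Rightarrow> nat set) \<Rightarrow> real mat" where
  "nngp_F n S N = mat n n (\<lambda>(i, j).
     if i = j then
       (if N i = {} then S $$ (i, i)
        else S $$ (i, i) - (nngp_w S (N i) i * submatrix S (N i) {i}) $$ (0, 0))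
     else 0)"

definition nngp_Q :: "nat \<Rightarrow> real mat \<Rightarrow> (nat \<Rightarrow> nat set) \<Rightarrow> real mat" where
  "nngp_Q n S N = transpose_mat (1\<^sub>m n - nngp_B n S N) * minv (nngp_F n S N)
                    * (1\<^sub>m n - nngp_B n S N)"

definition KLD_I :: "real mat \<Rightarrow> real" where
  "KLD_I E = mat_trace E - ln (det E)"

definition nearest_prev_neighbors ::
    "(nat \<Rightarrow> 'a::metric_space) \<Rightarrow> nat \<Rightarrow> nat \<Rightarrow> nat set \<Rightarrow> bool" where
  "nearest_prev_neighbors s m i Ni \<longleftrightarrow>
     Ni \<subseteq> {0..<i} \<and> card Ni = min m i \<and>
     (\<forall>j \<in> Ni. \<forall>k \<in> {0..<i} - Ni. dist (s i) (s j) \<le> dist (s i) (s k))"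

end

theory Submission
  imports Defs
begin

definition idx :: "nat set \<Rightarrow> nat \<Rightarrow> nat" where "idx N j = card {a\<in>N. a < j}"

lemma pick_single[simp]: "pick {i} 0 = i" by (simp add: Least_equality)

lemma idx_pick: "t < card N \<Longrightarrow> idx N (pick N t) = t"
  unfolding idx_def by (rule card_pick_le)

lemma pick_idx: "j \<in> N \<Longrightarrow> pick N (idx N j) = j"
  unfolding idx_def by (rule pick_card_in_set)

lemma idx_less: "finite N \<Longrightarrow> j \<in> N \<Longrightarrow> idx N j < card N"
  unfolding idx_def by (rule psubset_card_mono) auto

lemma pick_bij: "finite N \<Longrightarrow> bij_betw (pick N) {..<card N} N"
proof (rule bij_betw_byWitness[where f' = "idx N"])
  assume f: "finite N"
  show "\<forall>a\<in>{..<card N}. idx N (pick N a) = a" using idx_pick by auto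
  show "\<forall>a'\<in>N. pick N (idx N a') = a'" using pick_idx by auto
  show "pick N ` {..<card N} \<subseteq> N" using pick_in_set_le by auto
  show "idx N ` N \<subseteq> {..<card N}" using idx_less f by auto
qed

lemma sum_pick: "finite N \<Longrightarrow> (\<Sum>j\<in>N. f j) = (\<Sum>t<card N. f (pick N t))"
  using sum.reindex_bij_betw[OF pick_bij, of N f] by simp

lemma sum_supp: "N \<subseteq> {..<(n::nat)} \<Longrightarrow> (\<And>j. j < n \<Longrightarrow> j \<notin> N \<Longrightarrow> f j = 0) \<Longrightarrow>
   (\<Sum>j<n. f j) = (\<Sum>j\<in>N. f j)"
  by (rule sum.mono_neutral_right) auto

lemma set_sub: "N \<subseteq> {..<(n::nat)} \<Longrightarrow> {j. j < n \<and> j \<in> N} = N" by auto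

lemma sub_carrier:
  assumes S: "S \<in> carrier_mat n n" and N: "N \<subseteq> {..<n}" and i: "i < n"
  shows "submatrix S N N \<in> carrier_mat (card N) (card N)"
    "submatrix S {i} N \<in> carrier_mat 1 (card N)"
    "submatrix S N {i} \<in> carrier_mat (card N) 1"
proof -
  have d: "dim_row S = n" "dim_col S = n" using S by auto
  have a: "{j. j < n \<and> j \<in> N} = N" using N by auto
  have b: "{j. j < n \<and> j \<in> {i}} = {i}" using i by auto
  show "submatrix S N N \<in> carrier_mat (card N) (card N)"
    by (rule carrier_matI) (simp_all only: dim_submatrix d a)
  show "submatrix S {i} N \<in> carrier_mat 1 (card N)"
    by (rule carrier_matI) (simp_all only: dim_submatrix d a b card_1_singleton_iff, simp)
  show "submatrix S N {i} \<in> carrier_mat (card N) 1"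
    by (rule carrier_matI) (simp_all only: dim_submatrix d a b, simp)
qed

lemma sub_index:
  assumes S: "S \<in> carrier_mat n n" and N: "N \<subseteq> {..<n}" and i: "i < n"
  shows "r < card N \<Longrightarrow> t < card N \<Longrightarrow> submatrix S N N $$ (r,t) = S $$ (pick N r, pick N t)"
    "t < card N \<Longrightarrow> submatrix S {i} N $$ (0,t) = S $$ (i, pick N t)"
    "t < card N \<Longrightarrow> submatrix S N {i} $$ (t,0) = S $$ (pick N t, i)"
proof -
  have d: "dim_row S = n" "dim_col S = n" using S by auto
  have a: "{j. j < n \<and> j \<in> N} = N" using N by auto
  have b: "{j. j < n \<and> j \<in> {i}} = {i}" using i by auto
  show "r < card N \<Longrightarrow> t < card N \<Longrightarrow> submatrix S N N $$ (r,t) = S $$ (pick N r, pick N t)"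
    by (rule submatrix_index) (simp_all only: d a)
  show "t < card N \<Longrightarrow> submatrix S {i} N $$ (0,t) = S $$ (i, pick N t)"
    using submatrix_index[of 0 S "{i}" t N] by (simp only: d a b pick_single, simp)
  show "t < card N \<Longrightarrow> submatrix S N {i} $$ (t,0) = S $$ (pick N t, i)"
    using submatrix_index[of t S N 0 "{i}"] by (simp only: d a b pick_single, simp)
qed

lemma sub_carrier_NN:
  assumes S: "S \<in> carrier_mat n n" and N: "N \<subseteq> {..<n}"
  shows "submatrix S N N \<in> carrier_mat (card N) (card N)"
proof -
  have d: "dim_row S = n" "dim_col S = n" using S by auto
  have a: "{j. j < n \<and> j \<in> N} = N" using N by auto
  show ?thesis by (rule carrier_matI) (simp_all only: dim_submatrix d a)
qed

lemma sub_index_NN: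
  assumes S: "S \<in> carrier_mat n n" and N: "N \<subseteq> {..<n}"
  shows "r < card N \<Longrightarrow> t < card N \<Longrightarrow> submatrix S N N $$ (r,t) = S $$ (pick N r, pick N t)"
proof -
  have d: "dim_row S = n" "dim_col S = n" using S by auto
  have a: "{j. j < n \<and> j \<in> N} = N" using N by auto
  show "r < card N \<Longrightarrow> t < card N \<Longrightarrow> submatrix S N N $$ (r,t) = S $$ (pick N r, pick N t)"
    by (rule submatrix_index) (simp_all only: d a)
qed

definition qf :: "nat \<Rightarrow> real mat \<Rightarrow> (nat \<Rightarrow> real) \<Rightarrow> real" where
  "qf n S x = (\<Sum>j<n. \<Sum>k<n. x j * S $$ (j,k) * x k)"

lemma qf_vec: assumes S: "S \<in> carrier_mat n n"
  shows "vec n x \<bullet> (S *\<^sub>v vec n x) = qf n S x"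
proof -
  have "vec n x \<bullet> (S *\<^sub>v vec n x) = (\<Sum>j<n. x j * (\<Sum>k<n. S $$ (j,k) * x k))"
    using S by (simp add: scalar_prod_def mult_mat_vec_def lessThan_atLeast0)
  also have "\<dots> = qf n S x" unfolding qf_def
    by (simp add: sum_distrib_left mult.assoc)
  finally show ?thesis .
qed

lemma pd_qf: assumes pd: "pos_def_mat n S"
  shows "qf n S x \<ge> 0" "(\<exists>j<n. x j \<noteq> 0) \<Longrightarrow> qf n S x > 0"
proof -
  have S: "S \<in> carrier_mat n n" using pd by (simp add: pos_def_mat_def)
  show g: "(\<exists>j<n. x j \<noteq> 0) \<Longrightarrow> qf n S x > 0"
  proof -
    assume "\<exists>j<n. x j \<noteq> 0"
    then have "vec n x \<noteq> 0\<^sub>v n" by (metis index_vec index_zero_vec(1))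
    then show ?thesis using pd qf_vec[OF S] by (auto simp: pos_def_mat_def)
  qed
  show "qf n S x \<ge> 0"
  proof (cases "\<exists>j<n. x j \<noteq> 0")
    case True then show ?thesis using g by simp
  next
    case False then show ?thesis unfolding qf_def by simp
  qed
qed

lemma minv_props: assumes A: "A \<in> carrier_mat k k" and d: "det A \<noteq> (0::real)"
  shows "minv A \<in> carrier_mat k k" "A * minv A = 1\<^sub>m k" "minv A * A = 1\<^sub>m k"
proof -
  obtain B where B: "mat_inverse A = Some B"
  proof (cases "mat_inverse A")
    case None
    then show ?thesis using mat_inverse(1)[OF A None, where b="()"] det_non_zero_imp_unit[OF A d, where b="()"] by blast
  next
    case (Some B) then show ?thesis using that by blast
  qed
  then have "minv A = B" by (simp add: minv_def)
  then show "minv A \<in> carrier_mat k k" "A * minv A = 1\<^sub>m k" "minv A * A = 1\<^sub>m k"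
    using mat_inverse(2)[OF A B] by auto
qed

lemma qf_supp: assumes N: "N \<subseteq> {..<n}" and x: "\<And>j. j \<notin> N \<Longrightarrow> x j = 0"
  shows "qf n S x = (\<Sum>r<card N. \<Sum>t<card N. x (pick N r) * S $$ (pick N r, pick N t) * x (pick N t))"
proof -
  have f: "finite N" using N finite_subset by blast
  have "qf n S x = (\<Sum>j\<in>N. \<Sum>k<n. x j * S $$ (j,k) * x k)"
    unfolding qf_def by (rule sum_supp[OF N]) (simp add: x)
  also have "\<dots> = (\<Sum>j\<in>N. \<Sum>k\<in>N. x j * S $$ (j,k) * x k)"
    by (rule sum.cong[OF refl], rule sum_supp[OF N]) (simp add: x)
  also have "\<dots> = (\<Sum>r<card N. \<Sum>t<card N. x (pick N r) * S $$ (pick N r, pick N t) * x (pick N t))"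
    by (simp add: sum_pick[OF f])
  finally show ?thesis .
qed

lemma SNN_det: assumes pd: "pos_def_mat n S" and N: "N \<subseteq> {..<n}"
  shows "det (submatrix S N N) \<noteq> 0"
proof
  assume "det (submatrix S N N) = 0"
  have S: "S \<in> carrier_mat n n" using pd by (simp add: pos_def_mat_def)
  have f: "finite N" using N finite_subset by blast
  note C = sub_carrier_NN[OF S N]
  obtain u where u: "u \<in> carrier_vec (card N)" "u \<noteq> 0\<^sub>v (card N)" "submatrix S N N *\<^sub>v u = 0\<^sub>v (card N)"
    using det_0_iff_vec_prod_zero_field[OF C] \<open>det (submatrix S N N) = 0\<close> by blast
  define x where "x j = (if j \<in> N then u $ idx N j else 0)" for j
  have xp: "x (pick N r) = u $ r" if "r < card N" for r
    using that pick_in_set_le[OF that] idx_pick[OF that] by (simp add: x_def)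
  have "qf n S x = (\<Sum>r<card N. \<Sum>t<card N. x (pick N r) * S $$ (pick N r, pick N t) * x (pick N t))"
    by (rule qf_supp[OF N]) (simp add: x_def)
  also have "\<dots> = (\<Sum>r<card N. \<Sum>t<card N. u $ r * submatrix S N N $$ (r, t) * u $ t)"
    by (auto simp: xp sub_index_NN[OF S N] intro!: sum.cong)
  also have "\<dots> = u \<bullet> (submatrix S N N *\<^sub>v u)"
    using u(1) C by (simp add: scalar_prod_def mult_mat_vec_def lessThan_atLeast0 sum_distrib_left mult.assoc)
  also have "\<dots> = 0" using u(3) u(1) by simp
  finally have q0: "qf n S x = 0" .
  obtain r where r: "r < card N" "u $ r \<noteq> 0" using u(1,2) by (metis carrier_vecD eq_vecI index_zero_vec(1,2))
  have "pick N r < n" using pick_in_set_le[OF r(1)] N by auto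
  then have "\<exists>j<n. x j \<noteq> 0" using xp[OF r(1)] r(2) by auto
  then have "qf n S x > 0" by (rule pd_qf(2)[OF pd])
  then show False using q0 by simp
qed

lemma pd_sym: assumes pd: "pos_def_mat n S" and "a < n" "b < n"
  shows "S $$ (a,b) = S $$ (b,a)"
proof -
  have S: "S \<in> carrier_mat n n" "transpose_mat S = S" using pd by (auto simp: pos_def_mat_def)
  have "transpose_mat S $$ (b,a) = S $$ (a,b)" using S(1) assms(2,3) by simp
  then show ?thesis using S(2) by simp
qed

definition bf :: "real mat \<Rightarrow> nat set \<Rightarrow> nat \<Rightarrow> nat \<Rightarrow> real" where
  "bf S N i j = (if j \<in> N then nngp_w S N i $$ (0, idx N j) else 0)"

definition af :: "real mat \<Rightarrow> nat set \<Rightarrow> nat \<Rightarrow> nat \<Rightarrow> real" where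
  "af S N i j = (if j = i then 1 else 0) - bf S N i j"

definition Fv :: "real mat \<Rightarrow> nat set \<Rightarrow> nat \<Rightarrow> real" where
  "Fv S N i = (if N = {} then S $$ (i, i)
        else S $$ (i, i) - (nngp_w S N i * submatrix S N {i}) $$ (0, 0))"

lemma sum_bf: assumes N: "N \<subseteq> {..<n}"
  shows "(\<Sum>k<n. f k * bf S N i k) = (\<Sum>t<card N. f (pick N t) * nngp_w S N i $$ (0, t))"
proof -
  have fN: "finite N" using N finite_subset by blast
  have "(\<Sum>k<n. f k * bf S N i k) = (\<Sum>k\<in>N. f k * bf S N i k)"
    by (rule sum_supp[OF N]) (simp add: bf_def)
  also have "\<dots> = (\<Sum>t<card N. f (pick N t) * nngp_w S N i $$ (0, t))"
    by (simp add: sum_pick[OF fN] bf_def pick_in_set_le idx_pick)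
  finally show ?thesis .
qed

lemma NE: assumes pd: "pos_def_mat n S" and N: "N \<subseteq> {..<n}" and i: "i < n" and j: "j \<in> N"
  shows "(\<Sum>k<n. S $$ (j,k) * bf S N i k) = S $$ (j,i)"
proof -
  have S: "S \<in> carrier_mat n n" using pd by (simp add: pos_def_mat_def)
  have fN: "finite N" using N finite_subset by blast
  define M where "M = submatrix S N N"
  define Si where "Si = submatrix S {i} N"
  have M: "M \<in> carrier_mat (card N) (card N)" unfolding M_def by (rule sub_carrier_NN[OF S N])
  have Si: "Si \<in> carrier_mat 1 (card N)" unfolding Si_def by (rule sub_carrier(2)[OF S N i])
  have dM: "det M \<noteq> 0" unfolding M_def by (rule SNN_det[OF pd N])
  note MI = minv_props[OF M dM]
  have w: "nngp_w S N i = Si * minv M" by (simp add: nngp_w_def M_def Si_def)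
  have wM: "nngp_w S N i * M = Si"
    unfolding w using Si M MI by (simp add: assoc_mult_mat[OF Si MI(1) M])
  have wc: "nngp_w S N i \<in> carrier_mat 1 (card N)" unfolding w using Si MI(1) by simp
  define r where "r = idx N j"
  have r: "r < card N" "pick N r = j" using idx_less[OF fN j] pick_idx[OF j] by (auto simp: r_def)
  have jn: "j < n" using j N by auto
  have "(\<Sum>k<n. S $$ (j,k) * bf S N i k) = (\<Sum>t<card N. S $$ (j, pick N t) * nngp_w S N i $$ (0, t))"
    by (rule sum_bf[OF N])
  also have "\<dots> = (\<Sum>t<card N. nngp_w S N i $$ (0, t) * M $$ (t, r))"
  proof (rule sum.cong[OF refl])
    fix t assume t: "t \<in> {..<card N}"
    then have pt: "pick N t < n" using pick_in_set_le[of t N] N by auto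
    show "S $$ (j, pick N t) * nngp_w S N i $$ (0, t) = nngp_w S N i $$ (0, t) * M $$ (t, r)"
      using t r pd_sym[OF pd jn pt] by (simp add: M_def sub_index_NN[OF S N])
  qed
  also have "\<dots> = (nngp_w S N i * M) $$ (0, r)"
    using wc M r(1) by (simp add: index_mult_mat scalar_prod_def lessThan_atLeast0)
  also have "\<dots> = S $$ (i, j)" using wM r Si by (simp add: Si_def sub_index(2)[OF S N i])
  also have "\<dots> = S $$ (j, i)" using pd_sym[OF pd i jn] .
  finally show ?thesis .
qed

lemma w_carrier: assumes pd: "pos_def_mat n S" and N: "N \<subseteq> {..<n}" and i: "i < n"
  shows "nngp_w S N i \<in> carrier_mat 1 (card N)"
proof -
  have S: "S \<in> carrier_mat n n" using pd by (simp add: pos_def_mat_def)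
  have M: "submatrix S N N \<in> carrier_mat (card N) (card N)" by (rule sub_carrier_NN[OF S N])
  note MI = minv_props[OF M SNN_det[OF pd N]]
  show ?thesis unfolding nngp_w_def using sub_carrier(2)[OF S N i] MI(1) by simp
qed

lemma Fv_eq: assumes pd: "pos_def_mat n S" and N: "N \<subseteq> {..<n}" and i: "i < n"
  shows "Fv S N i = S $$ (i,i) - (\<Sum>k<n. S $$ (i,k) * bf S N i k)"
proof (cases "N = {}")
  case True then show ?thesis by (simp add: Fv_def bf_def)
next
  case False
  have S: "S \<in> carrier_mat n n" using pd by (simp add: pos_def_mat_def)
  note wc = w_carrier[OF pd N i]
  note c3 = sub_carrier(3)[OF S N i]
  have "(nngp_w S N i * submatrix S N {i}) $$ (0, 0) = (\<Sum>t<card N. nngp_w S N i $$ (0,t) * submatrix S N {i} $$ (t, 0))"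
    using wc c3 by (simp add: index_mult_mat scalar_prod_def lessThan_atLeast0)
  also have "\<dots> = (\<Sum>t<card N. S $$ (i, pick N t) * nngp_w S N i $$ (0,t))"
  proof (rule sum.cong[OF refl])
    fix t assume t: "t \<in> {..<card N}"
    then have pt: "pick N t < n" using pick_in_set_le[of t N] N by auto
    show "nngp_w S N i $$ (0,t) * submatrix S N {i} $$ (t, 0) = S $$ (i, pick N t) * nngp_w S N i $$ (0,t)"
      using t pd_sym[OF pd i pt] by (simp add: sub_index(3)[OF S N i])
  qed
  also have "\<dots> = (\<Sum>k<n. S $$ (i,k) * bf S N i k)" by (rule sum_bf[OF N, symmetric])
  finally show ?thesis using False by (simp add: Fv_def)
qed

lemma qf_add: assumes pd: "pos_def_mat n S"
  shows "qf n S (\<lambda>j. x j + y j) = qf n S x + 2 * (\<Sum>j<n. y j * (\<Sum>k<n. S $$ (j,k) * x k)) + qf n S y"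
proof -
  have A: "(\<Sum>j<n. \<Sum>k<n. x j * S $$ (j,k) * y k) = (\<Sum>j<n. y j * (\<Sum>k<n. S $$ (j,k) * x k))"
  proof -
    have "(\<Sum>j<n. \<Sum>k<n. x j * S $$ (j,k) * y k) = (\<Sum>k<n. \<Sum>j<n. x j * S $$ (j,k) * y k)"
      by (rule sum.swap)
    also have "\<dots> = (\<Sum>k<n. y k * (\<Sum>j<n. S $$ (k,j) * x j))"
      by (auto simp: sum_distrib_left pd_sym[OF pd] mult_ac intro!: sum.cong)
    finally show ?thesis .
  qed
  have B: "(\<Sum>j<n. \<Sum>k<n. y j * S $$ (j,k) * x k) = (\<Sum>j<n. y j * (\<Sum>k<n. S $$ (j,k) * x k))"
    by (simp add: sum_distrib_left mult.assoc)
  have "qf n S (\<lambda>j. x j + y j) = (\<Sum>j<n. \<Sum>k<n. x j * S $$ (j,k) * x k + x j * S $$ (j,k) * y k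
       + y j * S $$ (j,k) * x k + y j * S $$ (j,k) * y k)"
    unfolding qf_def by (simp add: algebra_simps)
  also have "\<dots> = qf n S x + (\<Sum>j<n. \<Sum>k<n. x j * S $$ (j,k) * y k)
     + (\<Sum>j<n. \<Sum>k<n. y j * S $$ (j,k) * x k) + qf n S y"
    unfolding qf_def by (simp add: sum.distrib)
  finally show ?thesis unfolding A B by simp
qed

lemma g_af: assumes pd: "pos_def_mat n S" and N: "N \<subseteq> {..<i}" and i: "i < n"
  shows "(\<Sum>k<n. S $$ (j,k) * af S N i k) = S $$ (j,i) - (\<Sum>k<n. S $$ (j,k) * bf S N i k)"
proof -
  have "(\<Sum>k<n. S $$ (j,k) * af S N i k) = (\<Sum>k<n. S $$ (j,k) * (if k = i then 1 else 0)) - (\<Sum>k<n. S $$ (j,k) * bf S N i k)"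
    unfolding af_def by (simp add: right_diff_distrib sum_subtractf)
  also have "(\<Sum>k<n. S $$ (j,k) * (if k = i then 1 else 0)) = S $$ (j,i)"
    using i by (simp add: if_distrib cong: if_cong)
  finally show ?thesis .
qed

lemma g_af0: assumes pd: "pos_def_mat n S" and N: "N \<subseteq> {..<i}" and i: "i < n" and j: "j \<in> N"
  shows "(\<Sum>k<n. S $$ (j,k) * af S N i k) = 0"
proof -
  have N': "N \<subseteq> {..<n}" using N i by auto
  show ?thesis using g_af[OF pd N i] NE[OF pd N' i j] by simp
qed

lemma q_af: assumes pd: "pos_def_mat n S" and N: "N \<subseteq> {..<i}" and i: "i < n"
  shows "qf n S (af S N i) = Fv S N i"
proof -
  have N': "N \<subseteq> {..<n}" using N i by auto
  have "qf n S (af S N i) = (\<Sum>j<n. af S N i j * (\<Sum>k<n. S $$ (j,k) * af S N i k))"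
    unfolding qf_def by (simp add: sum_distrib_left mult.assoc)
  also have "\<dots> = (\<Sum>j<n. if j = i then S $$ (i,i) - (\<Sum>k<n. S $$ (i,k) * bf S N i k) else 0)"
  proof (rule sum.cong[OF refl])
    fix j assume j: "j \<in> {..<n}"
    show "af S N i j * (\<Sum>k<n. S $$ (j,k) * af S N i k) =
      (if j = i then S $$ (i,i) - (\<Sum>k<n. S $$ (i,k) * bf S N i k) else 0)"
    proof (cases "j = i")
      case True
      have "i \<notin> N" using N by auto
      then show ?thesis using True g_af[OF pd N i, of i] by (simp add: af_def bf_def)
    next
      case False
      show ?thesis
      proof (cases "j \<in> N")
        case True then show ?thesis using False g_af0[OF pd N i True] by simp
      next
        case f2: False then show ?thesis using False by (simp add: af_def bf_def)
      qed
    qed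
  qed
  also have "\<dots> = Fv S N i" using i Fv_eq[OF pd N' i] by simp
  finally show ?thesis .
qed

lemma Fv_min: assumes pd: "pos_def_mat n S" and N: "N \<subseteq> {..<i}" and i: "i < n"
  and d: "\<And>j. j \<notin> N \<Longrightarrow> d j = 0"
  shows "Fv S N i \<le> qf n S (\<lambda>j. af S N i j + d j)"
proof -
  have "(\<Sum>j<n. d j * (\<Sum>k<n. S $$ (j,k) * af S N i k)) = 0"
  proof (rule sum.neutral, intro ballI)
    fix j assume "j \<in> {..<n}"
    show "d j * (\<Sum>k<n. S $$ (j,k) * af S N i k) = 0"
      by (cases "j \<in> N") (auto simp: g_af0[OF pd N i] d)
  qed
  then show ?thesis using qf_add[OF pd, of "af S N i" d] q_af[OF pd N i] pd_qf(1)[OF pd, of d] by simp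
qed

lemma Fv_mono: assumes pd: "pos_def_mat n S" and N: "N0 \<subseteq> N1" "N1 \<subseteq> {..<i}" and i: "i < n"
  shows "Fv S N1 i \<le> Fv S N0 i"
proof -
  have N0: "N0 \<subseteq> {..<i}" using N by auto
  have "Fv S N1 i \<le> qf n S (\<lambda>j. af S N1 i j + (bf S N1 i j - bf S N0 i j))"
    by (rule Fv_min[OF pd N(2) i]) (use N in \<open>auto simp: bf_def\<close>)
  also have "(\<lambda>j. af S N1 i j + (bf S N1 i j - bf S N0 i j)) = af S N0 i"
    by (auto simp: af_def)
  also have "qf n S (af S N0 i) = Fv S N0 i" by (rule q_af[OF pd N0 i])
  finally show ?thesis .
qed

lemma Fv_pos: assumes pd: "pos_def_mat n S" and N: "N \<subseteq> {..<i}" and i: "i < n"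
  shows "Fv S N i > 0"
proof -
  have "i \<notin> N" using N by auto
  then have "af S N i i \<noteq> 0" by (simp add: af_def bf_def)
  then have "qf n S (af S N i) > 0" using i by (intro pd_qf(2)[OF pd]) auto
  then show ?thesis using q_af[OF pd N i] by simp
qed

lemma prod_list_ones: "\<forall>x\<in>set xs. x = (1::real) \<Longrightarrow> prod_list xs = 1"
  by (induction xs) auto

lemma prod_list_upt: "prod_list (map f [0..<n]) = (\<Prod>i<n. f i)"
  by (induction n) (auto simp: lessThan_Suc mult.commute)

definition Dm :: "nat \<Rightarrow> real mat \<Rightarrow> (nat \<Rightarrow> nat set) \<Rightarrow> real mat" where
  "Dm n S Nf = mat n n (\<lambda>(i,j). if i = j then 1 / Fv S (Nf i) i else 0)"

lemma B_dims[simp]: "dim_row (nngp_B n S Nf) = n" "dim_col (nngp_B n S Nf) = n"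
  by (simp_all add: nngp_B_def)

lemma B_index0: "i < n \<Longrightarrow> j < n \<Longrightarrow> nngp_B n S Nf $$ (i,j) = bf S (Nf i) i j"
  by (simp add: nngp_B_def bf_def idx_def)

lemma F_index: "i < n \<Longrightarrow> j < n \<Longrightarrow> nngp_F n S Nf $$ (i,j) = (if i = j then Fv S (Nf i) i else 0)"
  by (simp add: nngp_F_def Fv_def)

lemma B_index: "i < n \<Longrightarrow> j < n \<Longrightarrow> (1\<^sub>m n - nngp_B n S Nf) $$ (i,j) = af S (Nf i) i j"
  by (simp add: nngp_B_def af_def bf_def idx_def)

lemma F_Dm: assumes Fp: "\<And>i. i < n \<Longrightarrow> Fv S (Nf i) i \<noteq> 0"
  shows "nngp_F n S Nf * Dm n S Nf = 1\<^sub>m n"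
proof (rule eq_matI)
  fix i j assume ij: "i < dim_row (1\<^sub>m n)" "j < dim_col (1\<^sub>m n)"
  then have "(nngp_F n S Nf * Dm n S Nf) $$ (i,j) = (\<Sum>k\<in>{0..<n}. nngp_F n S Nf $$ (i,k) * Dm n S Nf $$ (k,j))"
    by (simp add: index_mult_mat scalar_prod_def nngp_F_def Dm_def)
  also have "\<dots> = (\<Sum>k<n. (if i = k then Fv S (Nf i) i else 0) * (if k = j then 1 / Fv S (Nf k) k else 0))"
    unfolding lessThan_atLeast0 using ij by (intro sum.cong) (auto simp: F_index Dm_def)
  also have "\<dots> = (\<Sum>k<n. if k = i then (if i = j then 1 else 0) else 0)"
    using ij Fp[of i] by (intro sum.cong) auto
  also have "\<dots> = (if i = j then 1 else 0)" using ij by simp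
  finally show "(nngp_F n S Nf * Dm n S Nf) $$ (i,j) = 1\<^sub>m n $$ (i,j)" using ij by simp
qed (auto simp: nngp_F_def Dm_def)

lemma minv_F: assumes Fp: "\<And>i. i < n \<Longrightarrow> Fv S (Nf i) i \<noteq> 0"
  shows "minv (nngp_F n S Nf) = Dm n S Nf"
proof -
  have F: "nngp_F n S Nf \<in> carrier_mat n n" by (simp add: nngp_F_def)
  have D: "Dm n S Nf \<in> carrier_mat n n" by (simp add: Dm_def)
  have FD: "nngp_F n S Nf * Dm n S Nf = 1\<^sub>m n" by (rule F_Dm[OF Fp])
  have "det (nngp_F n S Nf) * det (Dm n S Nf) = 1" using det_mult[OF F D] FD by simp
  then have "det (nngp_F n S Nf) \<noteq> 0" by auto
  note MI = minv_props[OF F this]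
  have "minv (nngp_F n S Nf) = minv (nngp_F n S Nf) * (nngp_F n S Nf * Dm n S Nf)"
    using FD MI(1) by simp
  also have "\<dots> = (minv (nngp_F n S Nf) * nngp_F n S Nf) * Dm n S Nf"
    using assoc_mult_mat[OF MI(1) F D] by simp
  also have "\<dots> = Dm n S Nf" using MI(3) D by simp
  finally show ?thesis .
qed

lemma det_Dm: "det (Dm n S Nf) = (\<Prod>i<n. 1 / Fv S (Nf i) i)"
proof -
  have "upper_triangular (Dm n S Nf)" by (simp add: upper_triangular_def Dm_def)
  moreover have "Dm n S Nf \<in> carrier_mat n n" by (simp add: Dm_def)
  ultimately have "det (Dm n S Nf) = prod_list (diag_mat (Dm n S Nf))"
    by (rule det_upper_triangular)
  also have "\<dots> = (\<Prod>i<n. 1 / Fv S (Nf i) i)"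
    by (simp add: diag_mat_def Dm_def prod_list_upt[where f="\<lambda>i. Dm n S Nf $$ (i,i)", simplified Dm_def])
  finally show ?thesis .
qed

lemma det_A: assumes Nf: "\<And>i. i < n \<Longrightarrow> Nf i \<subseteq> {..<i}"
  shows "det (1\<^sub>m n - nngp_B n S Nf) = 1"
proof -
  let ?A = "1\<^sub>m n - nngp_B n S Nf"
  have A: "?A \<in> carrier_mat n n" by (rule minus_carrier_mat) (simp add: nngp_B_def)
  have ut: "upper_triangular (transpose_mat ?A)"
    unfolding upper_triangular_def
  proof (intro allI impI)
    fix i j assume i: "i < dim_row (transpose_mat ?A)" and j: "j < i"
    have "dim_col (nngp_B n S Nf) = n" by (simp add: nngp_B_def)
    then have "i \<notin> Nf j" using Nf[of j] i j by auto
    moreover have "i < n" "j < n" using i j A by auto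
    ultimately have ij: "i \<notin> Nf j" "i < n" "j < n" by auto
    have "transpose_mat ?A $$ (i,j) = ?A $$ (j,i)" using ij A by (intro index_transpose_mat(1)) auto
    also have "\<dots> = af S (Nf j) j i" using ij by (intro B_index)
    also have "\<dots> = 0" using ij \<open>j < i\<close> by (simp add: af_def bf_def)
    finally show "transpose_mat ?A $$ (i,j) = 0" .
  qed
  have "det ?A = det (transpose_mat ?A)" using det_transpose[OF A] by simp
  also have "\<dots> = prod_list (diag_mat (transpose_mat ?A))"
    by (rule det_upper_triangular[OF ut]) (use A in simp)
  also have "\<dots> = 1"
  proof -
    have "\<forall>x \<in> set (diag_mat (transpose_mat ?A)). x = 1"
    proof
      fix x assume "x \<in> set (diag_mat (transpose_mat ?A))"
      then obtain i where i0: "i < dim_row (transpose_mat ?A)" "x = transpose_mat ?A $$ (i,i)"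
        by (auto simp: diag_mat_def)
      then have i: "i < n" "x = ?A $$ (i,i)" using A by auto
      have "i \<notin> Nf i" using Nf[of i] i by auto
      have "nngp_B n S Nf $$ (i,i) = 0" using \<open>i \<notin> Nf i\<close> B_index0[of i n i S Nf] i(1) by (simp add: bf_def)
      then show "x = 1" using i A by simp
    qed
    then show ?thesis by (rule prod_list_ones)
  qed
  finally show ?thesis .
qed

lemma trace_sandwich: assumes A: "A \<in> carrier_mat n n" and R: "R \<in> carrier_mat n n"
  shows "mat_trace (transpose_mat R * A * R) = (\<Sum>j<n. \<Sum>k<n. A $$ (j,k) * (R * transpose_mat R) $$ (k,j))"
proof -
  have e1: "(transpose_mat R * A * R) $$ (i,i) = (\<Sum>j<n. \<Sum>k<n. R $$ (j,i) * A $$ (j,k) * R $$ (k,i))"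
    if i: "i < n" for i
    using A R i by (simp add: index_mult_mat scalar_prod_def lessThan_atLeast0 sum_distrib_left mult.assoc)
  have e2: "(R * transpose_mat R) $$ (k,j) = (\<Sum>i<n. R $$ (k,i) * R $$ (j,i))" if "k < n" "j < n" for k j
    using R that by (simp add: index_mult_mat scalar_prod_def lessThan_atLeast0)
  have "mat_trace (transpose_mat R * A * R) = (\<Sum>i<n. \<Sum>j<n. \<Sum>k<n. R $$ (j,i) * A $$ (j,k) * R $$ (k,i))"
    unfolding mat_trace_def using A R e1 by simp
  also have "\<dots> = (\<Sum>j<n. \<Sum>i<n. \<Sum>k<n. R $$ (j,i) * A $$ (j,k) * R $$ (k,i))" by (rule sum.swap)
  also have "\<dots> = (\<Sum>j<n. \<Sum>k<n. \<Sum>i<n. R $$ (j,i) * A $$ (j,k) * R $$ (k,i))"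
    by (rule sum.cong[OF refl], rule sum.swap)
  also have "\<dots> = (\<Sum>j<n. \<Sum>k<n. A $$ (j,k) * (R * transpose_mat R) $$ (k,j))"
    by (auto simp: e2 sum_distrib_left mult_ac intro!: sum.cong)
  finally show ?thesis .
qed

lemma Q_index: assumes Fp: "\<And>i. i < n \<Longrightarrow> Fv S (Nf i) i \<noteq> 0" and jk: "j < n" "k < n"
  shows "nngp_Q n S Nf $$ (j,k) = (\<Sum>p<n. af S (Nf p) p j * af S (Nf p) p k / Fv S (Nf p) p)"
proof -
  define A where "A = 1\<^sub>m n - nngp_B n S Nf"
  define D where "D = Dm n S Nf"
  have A: "A \<in> carrier_mat n n" unfolding A_def by (rule minus_carrier_mat) (simp add: nngp_B_def)
  have D: "D \<in> carrier_mat n n" by (simp add: Dm_def D_def)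
  define X where "X = transpose_mat A * D"
  have X: "X \<in> carrier_mat n n" using A D by (simp add: X_def)
  have Q: "nngp_Q n S Nf = X * A" by (simp add: nngp_Q_def minv_F[OF Fp] X_def A_def D_def)
  have Ai: "A $$ (p,j) = af S (Nf p) p j" if "p < n" "j < n" for p j
    unfolding A_def using that by (rule B_index)
  have AD: "X $$ (j,p) = af S (Nf p) p j / Fv S (Nf p) p" if p: "p < n" for p
  proof -
    have "X $$ (j,p) = (\<Sum>l\<in>{0..<n}. A $$ (l,j) * D $$ (l,p))"
      unfolding X_def using A D jk p by (simp add: index_mult_mat scalar_prod_def)
    also have "\<dots> = (\<Sum>l<n. if l = p then af S (Nf p) p j / Fv S (Nf p) p else 0)"
      unfolding lessThan_atLeast0 using jk p by (intro sum.cong) (auto simp: Ai D_def Dm_def)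
    also have "\<dots> = af S (Nf p) p j / Fv S (Nf p) p" using p by simp
    finally show ?thesis .
  qed
  have "nngp_Q n S Nf $$ (j,k) = (\<Sum>p\<in>{0..<n}. X $$ (j,p) * A $$ (p,k))"
    unfolding Q using A X jk by (simp add: index_mult_mat scalar_prod_def)
  also have "\<dots> = (\<Sum>p<n. af S (Nf p) p j * af S (Nf p) p k / Fv S (Nf p) p)"
    unfolding lessThan_atLeast0 using jk by (intro sum.cong) (auto simp: AD Ai)
  finally show ?thesis .
qed

lemma trace_E: assumes pd: "pos_def_mat n S" and R: "R \<in> carrier_mat n n" "R * transpose_mat R = S"
  and Nf: "\<And>i. i < n \<Longrightarrow> Nf i \<subseteq> {..<i}"
  shows "mat_trace (transpose_mat R * nngp_Q n S Nf * R) = real n"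
proof -
  have Fp: "Fv S (Nf i) i \<noteq> 0" if "i < n" for i using Fv_pos[OF pd Nf[OF that] that] by simp
  have Qc: "nngp_Q n S Nf \<in> carrier_mat n n" by (rule carrier_matI) (simp_all add: nngp_Q_def)
  have "mat_trace (transpose_mat R * nngp_Q n S Nf * R) = (\<Sum>j<n. \<Sum>k<n. nngp_Q n S Nf $$ (j,k) * S $$ (k,j))"
    using trace_sandwich[OF Qc R(1)] R(2) by simp
  also have "\<dots> = (\<Sum>j<n. \<Sum>k<n. \<Sum>p<n. (1 / Fv S (Nf p) p) * (af S (Nf p) p j * S $$ (j,k) * af S (Nf p) p k))"
  proof (intro sum.cong refl)
    fix j k assume j: "j \<in> {..<n}" and k: "k \<in> {..<n}"
    then have "S $$ (k,j) = S $$ (j,k)" using pd_sym[OF pd] by auto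
    then show "nngp_Q n S Nf $$ (j,k) * S $$ (k,j) = (\<Sum>p<n. (1 / Fv S (Nf p) p) * (af S (Nf p) p j * S $$ (j,k) * af S (Nf p) p k))"
      using j k by (simp add: Q_index[OF Fp] sum_distrib_right sum_distrib_left mult_ac)
  qed
  also have "\<dots> = (\<Sum>p<n. (1 / Fv S (Nf p) p) * qf n S (af S (Nf p) p))"
  proof -
    have "(\<Sum>j<n. \<Sum>k<n. \<Sum>p<n. (1 / Fv S (Nf p) p) * (af S (Nf p) p j * S $$ (j,k) * af S (Nf p) p k))
       = (\<Sum>j<n. \<Sum>p<n. \<Sum>k<n. (1 / Fv S (Nf p) p) * (af S (Nf p) p j * S $$ (j,k) * af S (Nf p) p k))"
      by (rule sum.cong[OF refl], rule sum.swap)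
    also have "\<dots> = (\<Sum>p<n. \<Sum>j<n. \<Sum>k<n. (1 / Fv S (Nf p) p) * (af S (Nf p) p j * S $$ (j,k) * af S (Nf p) p k))"
      by (rule sum.swap)
    finally show ?thesis by (simp add: qf_def sum_distrib_left)
  qed
  also have "\<dots> = (\<Sum>p<n. 1)"
    by (rule sum.cong[OF refl]) (use Fp in \<open>auto simp: q_af[OF pd Nf]\<close>)
  finally show ?thesis by simp
qed

lemma det_S_pos: assumes pd: "pos_def_mat n S" and R: "R \<in> carrier_mat n n" "R * transpose_mat R = S"
  shows "det S > 0"
proof -
  have S: "S \<in> carrier_mat n n" using pd by (simp add: pos_def_mat_def)
  have RT: "transpose_mat R \<in> carrier_mat n n" using R(1) by simp
  have "det S = det R * det R" using det_mult[OF R(1) RT] R(2) det_transpose[OF R(1)] by simp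
  then have ge: "det S \<ge> 0" by simp
  have "det S \<noteq> 0"
  proof
    assume "det S = 0"
    then obtain v where v: "v \<in> carrier_vec n" "v \<noteq> 0\<^sub>v n" "S *\<^sub>v v = 0\<^sub>v n"
      using det_0_iff_vec_prod_zero_field[OF S] by blast
    then have "v \<bullet> (S *\<^sub>v v) > 0" using pd by (auto simp: pos_def_mat_def)
    then show False using v by simp
  qed
  then show ?thesis using ge by simp
qed

lemma det_E: assumes pd: "pos_def_mat n S" and R: "R \<in> carrier_mat n n" "R * transpose_mat R = S"
  and Nf: "\<And>i. i < n \<Longrightarrow> Nf i \<subseteq> {..<i}"
  shows "det (transpose_mat R * nngp_Q n S Nf * R) = det S * (\<Prod>i<n. 1 / Fv S (Nf i) i)"
proof -
  have Fp: "Fv S (Nf i) i \<noteq> 0" if "i < n" for i using Fv_pos[OF pd Nf[OF that] that] by simp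
  define A where "A = 1\<^sub>m n - nngp_B n S Nf"
  define D where "D = Dm n S Nf"
  have A: "A \<in> carrier_mat n n" unfolding A_def by (rule minus_carrier_mat) (simp add: nngp_B_def)
  have D: "D \<in> carrier_mat n n" by (simp add: Dm_def D_def)
  have Q: "nngp_Q n S Nf = transpose_mat A * D * A" by (simp add: nngp_Q_def minv_F[OF Fp] A_def D_def)
  have dA: "det A = 1" unfolding A_def by (rule det_A[OF Nf])
  have AT: "transpose_mat A \<in> carrier_mat n n" using A by simp
  have Qc: "transpose_mat A * D * A \<in> carrier_mat n n" using A D by simp
  have dQ: "det (nngp_Q n S Nf) = det D" unfolding Q
    using det_mult[OF mult_carrier_mat[OF AT D] A] det_mult[OF AT D] det_transpose[OF A] dA by simp
  have RT: "transpose_mat R \<in> carrier_mat n n" using R(1) by simp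
  have Qc': "nngp_Q n S Nf \<in> carrier_mat n n" using Qc Q by simp
  have "det (transpose_mat R * nngp_Q n S Nf * R) = det (transpose_mat R) * det (nngp_Q n S Nf) * det R"
    using det_mult[OF mult_carrier_mat[OF RT Qc'] R(1)] det_mult[OF RT Qc'] by simp
  also have "\<dots> = det D * (det R * det (transpose_mat R))" using dQ by simp
  also have "det R * det (transpose_mat R) = det S" using det_mult[OF R(1) RT] R(2) by simp
  finally show ?thesis by (simp add: D_def det_Dm)
qed

lemma KLD_formula: assumes pd: "pos_def_mat n S" and R: "R \<in> carrier_mat n n" "R * transpose_mat R = S"
  and Nf: "\<And>i. i < n \<Longrightarrow> Nf i \<subseteq> {..<i}"
  shows "KLD_I (transpose_mat R * nngp_Q n S Nf * R) = real n - ln (det S * (\<Prod>i<n. 1 / Fv S (Nf i) i))"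
  unfolding KLD_I_def using trace_E[OF pd R Nf] det_E[OF pd R Nf] by simp

theorem propositionS2:
  fixes n :: nat
    and Sigma R :: "real mat"
    and s :: "nat \<Rightarrow> 'a::metric_space"
    and N :: "nat \<Rightarrow> nat \<Rightarrow> nat set"
  assumes pd: "pos_def_mat n Sigma"
    and R: "R \<in> carrier_mat n n" "R * transpose_mat R = Sigma"
    and nbr: "\<And>m i. i < n \<Longrightarrow> nearest_prev_neighbors s m i (N m i)"
    and nested: "\<And>m i. i < n \<Longrightarrow> N m i \<subseteq> N (Suc m) i"
  shows "KLD_I (transpose_mat R * nngp_Q n Sigma (N (Suc m)) * R)
           \<le> KLD_I (transpose_mat R * nngp_Q n Sigma (N m) * R)"
proof -
  have Nf: "N k i \<subseteq> {..<i}" if "i < n" for k i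
    using nbr[OF that, of k] by (auto simp: nearest_prev_neighbors_def)
  let ?P0 = "\<Prod>i<n. 1 / Fv Sigma (N m i) i"
  let ?P1 = "\<Prod>i<n. 1 / Fv Sigma (N (Suc m) i) i"
  have dS: "det Sigma > 0" by (rule det_S_pos[OF pd R])
  have le: "?P0 \<le> ?P1"
  proof (rule prod_mono)
    fix i assume i: "i \<in> {..<n}"
    then have i': "i < n" by simp
    have p1: "Fv Sigma (N (Suc m) i) i > 0" by (rule Fv_pos[OF pd Nf[OF i'] i'])
    have "Fv Sigma (N (Suc m) i) i \<le> Fv Sigma (N m i) i"
      by (rule Fv_mono[OF pd nested[OF i'] Nf[OF i'] i'])
    with p1 show "0 \<le> 1 / Fv Sigma (N m i) i \<and> 1 / Fv Sigma (N m i) i \<le> 1 / Fv Sigma (N (Suc m) i) i"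
      by (auto simp: frac_le)
  qed
  have p0: "?P0 > 0" using Fv_pos[OF pd Nf] by (intro prod_pos) auto
  have "ln (det Sigma * ?P0) \<le> ln (det Sigma * ?P1)"
    using dS p0 le by (intro ln_mono) (auto intro: mult_pos_pos)
  then show ?thesis
    using KLD_formula[OF pd R, of "N m"] KLD_formula[OF pd R, of "N (Suc m)"] Nf by simp
qed

end
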